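(* Let $\varphi\in\mathcal{M}$ be a matching. Then there exists a matching mechanism that is resolute, $\langle\varphi\rangle$-symmetric and weakly Pareto optimal.
   Context: Fix $n\ge 2$, $W=\{1,\dots,n\}$ (women), $M=\{n+1,\dots,2n\}$ (men), $I=W\cup M$. Permutations compose right-to-left. A preference profile is a function $p$ on $I$ assigning to each $x\in W$ a linear order $p(x)$ on $M$ and to each $y\in M$ a linear order $p(y)$ on $W$; $\mathcal{P}$ is the set of preference profiles. A matching is a permutation $\mu$ of $I$ with $\mu(W)=M$, $\mu(M)=W$ and $\mu(\mu(z))=z$ for all $z\in I$; $\mathcal{M}$ is the set of matchings. $\mu$ is weakly Pareto optimal for $p$ if there is no $\mu'\in\mathcal{M}$ with $\mu'(z)\succ_{p(z)}\mu(z)$ for every $z\in I$. Let $G^*=\{\psi\in\mathrm{Sym}(I):\{\psi(W),\psi(M)\}=\{W,M\}\}$. For a linear order $R$ on $X\subseteq I$ and $\psi\in\mathrm{Sym}(I)$, $\psi R$ is the relation on $\psi(X)$ with $(a,b)\in\psi R$ iff $(\psi^{-1}(a),\psi^{-1}(b))\in R$. For $p\in\mathcal{P}$, $\psi\in G^*$, $p^\psi(z)=\psi\,p(\psi^{-1}(z))$. For a permutation $\mu$, $\mu^\psi=\psi\mu\psi^{-1}$; $S^\psi=\{\mu^\psi:\mu\in S\}$. A matching mechanism is a correspondence $F$ from $\mathcal{P}$ to $\mathcal{M}$; it is resolute if $|F(p)|=1$ for all $p$; weakly Pareto optimal if every element of $F(p)$ is weakly Pareto optimal for $p$, for all $p$;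 for $U\subseteq G^*$ it is $U$-symmetric if $F(p^\psi)=F(p)^\psi$ for all $p\in\mathcal{P}$, $\psi\in U$. $\langle\varphi\rangle=\{id_I,\varphi\}$ is the group generated by $\varphi$. *)

theory Defs
  imports "HOL-Combinatorics.Permutations"
begin

definition women :: "nat \<Rightarrow> nat set" where "women n = {1..n}"
definition men :: "nat \<Rightarrow> nat set" where "men n = {n+1..2*n}"
definition agents :: "nat \<Rightarrow> nat set" where "agents n = women n \<union> men n"

(* A linear order R on X is a reflexive, transitive, antisymmetric, total relation
   on X (a set of pairs); (a,b) \<in> R means "a is weakly preferred to b". *)
definition strict_pref :: "(nat \<times> nat) set \<Rightarrow> nat \<Rightarrow> nat \<Rightarrow> bool" where
  "strict_pref R a b \<longleftrightarrow> (a, b) \<in> R \<and> a \<noteq> b"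

definition profiles :: "nat \<Rightarrow> (nat \<Rightarrow> (nat \<times> nat) set) set" where
  "profiles n = {p. (\<forall>x\<in>women n. linear_order_on (men n) (p x)) \<and>
                    (\<forall>y\<in>men n. linear_order_on (women n) (p y)) \<and>
                    (\<forall>z. z \<notin> agents n \<longrightarrow> p z = {})}"

definition matchings :: "nat \<Rightarrow> (nat \<Rightarrow> nat) set" where
  "matchings n = {\<mu>. \<mu> permutes agents n \<and> \<mu> ` women n = men n \<and> \<mu> ` men n = women n \<and>
                      (\<forall>z\<in>agents n. \<mu> (\<mu> z) = z)}"

definition weakly_pareto_optimal :: "nat \<Rightarrow> (nat \<Rightarrow> (nat \<times> nat) set) \<Rightarrow> (nat \<Rightarrow> nat) \<Rightarrow> bool" where
  "weakly_pareto_optimal n p \<mu> \<longleftrightarrow>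
     \<not> (\<exists>\<mu>'\<in>matchings n. \<forall>z\<in>agents n. strict_pref (p z) (\<mu>' z) (\<mu> z))"

definition Gstar :: "nat \<Rightarrow> (nat \<Rightarrow> nat) set" where
  "Gstar n = {\<psi>. \<psi> permutes agents n \<and> {\<psi> ` women n, \<psi> ` men n} = {women n, men n}}"

definition rel_act :: "(nat \<Rightarrow> nat) \<Rightarrow> (nat \<times> nat) set \<Rightarrow> (nat \<times> nat) set" where
  "rel_act \<psi> R = {(a, b). (inv \<psi> a, inv \<psi> b) \<in> R}"

definition profile_act :: "(nat \<Rightarrow> (nat \<times> nat) set) \<Rightarrow> (nat \<Rightarrow> nat) \<Rightarrow> (nat \<Rightarrow> (nat \<times> nat) set)" where
  "profile_act p \<psi> = (\<lambda>z. rel_act \<psi> (p (inv \<psi> z)))"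

definition perm_conj :: "(nat \<Rightarrow> nat) \<Rightarrow> (nat \<Rightarrow> nat) \<Rightarrow> (nat \<Rightarrow> nat)" where
  "perm_conj \<mu> \<psi> = \<psi> \<circ> \<mu> \<circ> inv \<psi>"

definition mechanism :: "nat \<Rightarrow> ((nat \<Rightarrow> (nat \<times> nat) set) \<Rightarrow> (nat \<Rightarrow> nat) set) \<Rightarrow> bool" where
  "mechanism n F \<longleftrightarrow> (\<forall>p\<in>profiles n. F p \<subseteq> matchings n)"

definition resolute :: "nat \<Rightarrow> ((nat \<Rightarrow> (nat \<times> nat) set) \<Rightarrow> (nat \<Rightarrow> nat) set) \<Rightarrow> bool" where
  "resolute n F \<longleftrightarrow> (\<forall>p\<in>profiles n. card (F p) = 1)"

definition mech_wpo :: "nat \<Rightarrow> ((nat \<Rightarrow> (nat \<times> nat) set) \<Rightarrow> (nat \<Rightarrow> nat) set) \<Rightarrow> bool" where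
  "mech_wpo n F \<longleftrightarrow> (\<forall>p\<in>profiles n. \<forall>\<mu>\<in>F p. weakly_pareto_optimal n p \<mu>)"

definition symmetric_wrt :: "nat \<Rightarrow> (nat \<Rightarrow> nat) set \<Rightarrow> ((nat \<Rightarrow> (nat \<times> nat) set) \<Rightarrow> (nat \<Rightarrow> nat) set) \<Rightarrow> bool" where
  "symmetric_wrt n U F \<longleftrightarrow>
     (\<forall>p\<in>profiles n. \<forall>\<psi>\<in>U. F (profile_act p \<psi>) = (\<lambda>\<mu>. perm_conj \<mu> \<psi>) ` F p)"

definition gen_group :: "(nat \<Rightarrow> nat) \<Rightarrow> (nat \<Rightarrow> nat) set" where
  "gen_group \<phi> = {id, \<phi>}"

end

theory Submission
  imports Defs
begin

lemma top_exists:
  assumes "linear_order_on A R" "finite A" "A \<noteq> {}"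
  shows "\<exists>m\<in>A. \<forall>b\<in>A. (m, b) \<in> R"
proof -
  have tot: "total_on A R" and tr: "trans R" and rf: "\<forall>x\<in>A. (x,x) \<in> R"
    using assms(1) by (auto simp: linear_order_on_def partial_order_on_def preorder_on_def refl_on_def)
  have "\<And>S. finite S \<Longrightarrow> S \<noteq> {} \<Longrightarrow> S \<subseteq> A \<Longrightarrow> \<exists>m\<in>S. \<forall>b\<in>S. (m, b) \<in> R"
  proof -
    fix S :: "'a set" assume "finite S" "S \<noteq> {}" "S \<subseteq> A"
    then show "\<exists>m\<in>S. \<forall>b\<in>S. (m, b) \<in> R"
    proof (induction S rule: finite_ne_induct)
      case (singleton x) then show ?case using rf by auto
    next
      case (insert x F)
      then obtain m where m: "m \<in> F" "\<forall>b\<in>F. (m, b) \<in> R" by auto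
      have "x \<in> A" "m \<in> A" using insert m by auto
      show ?case
      proof (cases "(m, x) \<in> R")
        case True then show ?thesis using m by auto
      next
        case False
        then have mx: "(x, m) \<in> R" using tot \<open>x \<in> A\<close> \<open>m \<in> A\<close> rf
          unfolding total_on_def by metis
        have "\<forall>b\<in>F. (x, b) \<in> R" using m mx tr unfolding trans_def by blast
        then show ?thesis using rf \<open>x \<in> A\<close> by auto
      qed
    qed
  qed
  then show ?thesis using assms by blast
qed

lemma wpo_top:
  assumes "z \<in> agents n" "antisym (p z)" "\<forall>\<mu>'\<in>matchings n. (\<mu> z, \<mu>' z) \<in> p z"
  shows "weakly_pareto_optimal n p \<mu>"
  using assms unfolding weakly_pareto_optimal_def strict_pref_def antisym_def by blast

definition Cset :: "nat \<Rightarrow> (nat \<Rightarrow> nat) \<Rightarrow> (nat \<Rightarrow> (nat \<times> nat) set) \<Rightarrow> (nat \<Rightarrow> nat) set" where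
  "Cset n \<phi> p = {\<mu> \<in> matchings n. perm_conj \<mu> \<phi> = \<mu> \<and> weakly_pareto_optimal n p \<mu>
      \<and> weakly_pareto_optimal n (profile_act p \<phi>) \<mu>}"

lemma phi_facts:
  assumes "\<phi> \<in> matchings n"
  shows "\<And>z. \<phi> (\<phi> z) = z" "inv \<phi> = \<phi>" "\<And>z. z \<in> women n \<Longrightarrow> \<phi> z \<in> men n"
    "\<And>z. z \<in> men n \<Longrightarrow> \<phi> z \<in> women n" "\<And>z. z \<notin> agents n \<Longrightarrow> \<phi> z = z"
proof -
  have pm: "\<phi> permutes agents n" and inv: "\<forall>z\<in>agents n. \<phi> (\<phi> z) = z"
    and w: "\<phi> ` women n = men n" and m: "\<phi> ` men n = women n"
    using assms by (auto simp: matchings_def)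
  show out: "\<And>z. z \<notin> agents n \<Longrightarrow> \<phi> z = z" using pm by (auto simp: permutes_def)
  show inv2: "\<And>z. \<phi> (\<phi> z) = z" using inv out by (metis)
  show "inv \<phi> = \<phi>" by (rule inv_equality) (use inv2 in auto)
  show "\<And>z. z \<in> women n \<Longrightarrow> \<phi> z \<in> men n" using w by auto
  show "\<And>z. z \<in> men n \<Longrightarrow> \<phi> z \<in> women n" using m by auto
qed

lemma Cset_swap:
  assumes "\<phi> \<in> matchings n"
  shows "Cset n \<phi> (profile_act p \<phi>) = Cset n \<phi> p"
proof -
  note f = phi_facts[OF assms]
  have "profile_act (profile_act p \<phi>) \<phi> = p"
    unfolding profile_act_def rel_act_def f(2) by (simp add: f(1))
  then show ?thesis unfolding Cset_def by auto
qed

lemma Cset_nonempty: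
  assumes "n \<ge> 2" "\<phi> \<in> matchings n" "p \<in> profiles n"
  shows "Cset n \<phi> p \<noteq> {}"
proof -
  note f = phi_facts[OF assms(2)]
  have one: "1 \<in> women n" using assms(1) by (simp add: women_def)
  have lo: "linear_order_on (men n) (p 1)" using assms(3) one by (simp add: profiles_def)
  have "finite (men n)" "men n \<noteq> {}" using assms(1) by (auto simp: men_def)
  then obtain m where m: "m \<in> men n" "\<forall>b\<in>men n. (m, b) \<in> p 1" using top_exists[OF lo] by blast
  have anti: "antisym (p 1)" using lo by (simp add: linear_order_on_def partial_order_on_def)
  have disj: "women n \<inter> men n = {}" by (auto simp: women_def men_def)
  define y where "y = \<phi> 1"
  define w where "w = \<phi> m"
  have y: "y \<in> men n" using f(3) one y_def by auto
  have w: "w \<in> women n" using f(4) m(1) w_def by auto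
  have ag: "1 \<in> agents n" "m \<in> agents n" "y \<in> agents n" "w \<in> agents n"
    using one m(1) y w by (auto simp: agents_def)
  have d: "1 \<noteq> m" "1 \<noteq> y" "w \<noteq> m" "w \<noteq> y" using one m(1) y w disj by auto
  have phieq: "\<phi> z = 1 \<longleftrightarrow> z = y" "\<phi> z = m \<longleftrightarrow> z = w" "\<phi> z = y \<longleftrightarrow> z = 1"
    "\<phi> z = w \<longleftrightarrow> z = m" for z using f(1) y_def w_def by metis+
  have py2: "\<phi> 1 = y" "\<phi> m = w" using y_def w_def by auto
  have py: "\<phi> y = 1" "\<phi> w = m" using f(1) y_def w_def by auto
  define \<mu> where "\<mu> z = (if z = 1 then m else if z = m then 1 else if z = y then w
      else if z = w then y else \<phi> z)" for z
  have inv\<mu>: "\<mu> (\<mu> z) = z" for z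
    unfolding \<mu>_def using d py py2 f(1) phieq by auto
  have out: "\<mu> z = z" if "z \<notin> agents n" for z
    unfolding \<mu>_def using that ag f(5) by auto
  have wm: "\<mu> z \<in> men n" if "z \<in> women n" for z
    unfolding \<mu>_def using that m(1) y w f(3) disj by auto
  have mw: "\<mu> z \<in> women n" if "z \<in> men n" for z
    unfolding \<mu>_def using that one w f(4) disj by auto
  have comm: "\<phi> (\<mu> (\<phi> z)) = \<mu> z" for z
    unfolding \<mu>_def using d py py2 f(1) phieq by (auto)
  have mat: "\<mu> \<in> matchings n"
    unfolding matchings_def
  proof (intro CollectI conjI ballI)
    show "\<mu> permutes agents n" unfolding permutes_def using out inv\<mu> by metis
    show "\<mu> ` women n = men n" using wm mw inv\<mu> by (metis image_subset_iff subset_antisym subsetI image_eqI)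
    show "\<mu> ` men n = women n" using wm mw inv\<mu> by (metis image_subset_iff subset_antisym subsetI image_eqI)
  qed (simp add: inv\<mu>)
  have pc: "perm_conj \<mu> \<phi> = \<mu>" unfolding perm_conj_def f(2) using comm by auto
  have mu1: "\<mu> 1 = m" unfolding \<mu>_def by simp
  have muy: "\<mu> y = w" proof (cases "y = m")
    case True then have "w = 1" using py py2 by simp
    then show ?thesis using True d unfolding \<mu>_def by simp
  qed (use d in \<open>simp add: \<mu>_def\<close>)
  have wpo1: "weakly_pareto_optimal n p \<mu>"
  proof (rule wpo_top[where z=1 and p=p, OF ag(1) anti], intro ballI)
    fix \<mu>' assume "\<mu>' \<in> matchings n"
    then have "\<mu>' 1 \<in> men n" using one by (auto simp: matchings_def)
    then show "(\<mu> 1, \<mu>' 1) \<in> p 1" using m mu1 by auto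
  qed
  have pa: "profile_act p \<phi> y = {(a, b). (\<phi> a, \<phi> b) \<in> p 1}"
    unfolding profile_act_def rel_act_def f(2) using py by simp
  have anti2: "antisym (profile_act p \<phi> y)" unfolding pa using anti f(1)
    unfolding antisym_def by (metis (no_types, lifting) case_prodD mem_Collect_eq)
  have wpo2: "weakly_pareto_optimal n (profile_act p \<phi>) \<mu>"
  proof (rule wpo_top[where z=y and p="profile_act p \<phi>", OF ag(3) anti2], intro ballI)
    fix \<mu>' assume "\<mu>' \<in> matchings n"
    then have "\<mu>' y \<in> women n" using y by (auto simp: matchings_def)
    then have "\<phi> (\<mu>' y) \<in> men n" using f(3) by auto
    then show "(\<mu> y, \<mu>' y) \<in> profile_act p \<phi> y" unfolding pa muy using m py by auto
  qed
  show ?thesis using mat pc wpo1 wpo2 unfolding Cset_def by blast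
qed

theorem theorem6:
  fixes n :: nat and \<phi> :: "nat \<Rightarrow> nat"
  assumes "n \<ge> 2"
    and "\<phi> \<in> matchings n"
  shows "\<exists>F. mechanism n F \<and> resolute n F \<and> symmetric_wrt n (gen_group \<phi>) F \<and> mech_wpo n F"
proof -
  define F where "F p = {SOME \<mu>. \<mu> \<in> Cset n \<phi> p}" for p
  have inC: "(SOME \<mu>. \<mu> \<in> Cset n \<phi> p) \<in> Cset n \<phi> p" if "p \<in> profiles n" for p
    using Cset_nonempty[OF assms that] by (simp add: some_in_eq)
  have "mechanism n F" unfolding mechanism_def F_def using inC by (auto simp: Cset_def)
  moreover have "resolute n F" unfolding resolute_def F_def by simp
  moreover have "mech_wpo n F" unfolding mech_wpo_def F_def using inC by (auto simp: Cset_def)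
  moreover have "symmetric_wrt n (gen_group \<phi>) F"
    unfolding symmetric_wrt_def gen_group_def
  proof (intro ballI)
    fix p \<psi> assume p: "p \<in> profiles n" and "\<psi> \<in> {id, \<phi>}"
    then consider "\<psi> = id" | "\<psi> = \<phi>" by auto
    then show "F (profile_act p \<psi>) = (\<lambda>\<mu>. perm_conj \<mu> \<psi>) ` F p"
    proof cases
      case 1
      have "profile_act p id = p" unfolding profile_act_def rel_act_def by (simp add: inv_id)
      moreover have "perm_conj \<mu> id = \<mu>" for \<mu> unfolding perm_conj_def by (simp add: inv_id)
      ultimately show ?thesis using 1 by simp
    next
      case 2
      have "perm_conj (SOME \<mu>. \<mu> \<in> Cset n \<phi> p) \<phi> = (SOME \<mu>. \<mu> \<in> Cset n \<phi> p)"
        using inC[OF p] by (simp add: Cset_def)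
      then show ?thesis using 2 Cset_swap[OF assms(2)] unfolding F_def by simp
    qed
  qed
  ultimately show ?thesis by blast
qed

end
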